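(* Let $v=(v_j)_{j\in\mathbb{N}}\in\mathbb{R}^{\mathbb{N}}$, $\omega_0\in\mathbb{R}^n$ and $m\in\mathbb{N}$. If there exists an integer $i\ge1$ such that $CB^{m+1}P_{i-1}(v)\omega_0\neq0$, then there exists $k_0\in\mathbb{N}$ such that for every integer $N\ge1$, the map $\phi:\mathbb{R}^{k_0+N}\to\mathbb{R}^N$, \[ \phi(w)=\big(CB^mP_{k_0}(w)\omega_0,\dots,CB^mP_{k_0+N-1}(w)\omega_0\big), \] has a differential of rank $N$ at $(v_0,\dots,v_{k_0+N-1})$.
   Context: Let $n\ge1$, $A,B\in\mathrm{End}(\mathbb{R}^n)$, $C\in\mathcal{L}(\mathbb{R}^n,\mathbb{R})$. Polynomials have commuting scalar indeterminates $X_0,X_1,\dots$ and coefficients in $\mathrm{End}(\mathbb{R}^n)$. Define the linear map $\Psi$ by $\Psi(P)(X_0,\dots,X_k)=P(X_0,\dots,X_{k-1})(A+X_0B)+\sum_{i=0}^{k-1}\frac{\partial P}{\partial X_i}(X_0,\dots,X_{k-1})X_{i+1}$, where $k$ is the least $\ell$ such that $P$ involves only $X_0,\dots,X_{\ell-1}$. Let $P_0=I$ and $P_{k+1}=\Psi(P_k)$, so $P_k$ is a polynomial in $X_0,\dots,X_{k-1}$. For a polynomial $P$ in $X_0,\dots,X_{k-1}$ and a sequence (or vector with at least $k$ entries) $v$, $P(v)=P(v_0,\dots,v_{k-1})$. *)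

theory Defs
  imports "HOL-Analysis.Derivative" "Jordan_Normal_Form.DL_Rank"
begin

text \<open>Endomorphisms of R^n are n x n real matrices (JNF type real mat), the
functional C is a 1 x n matrix, omega0 is a vector of dimension n.
A polynomial P in X_0, X_1, ... with matrix coefficients is represented by its
polynomial function on sequences v :: nat => real (so P(v) = P(v_0,...,v_(k-1))).
The formal partial derivative dP/dX_i evaluated at v is the entrywise derivative
of t |-> P(v(i:=t)) at t = v i.\<close>

definition pderiv_at :: "nat \<Rightarrow> ((nat \<Rightarrow> real) \<Rightarrow> real mat) \<Rightarrow> nat \<Rightarrow> (nat \<Rightarrow> real) \<Rightarrow> real mat" where
  "pderiv_at n P i v = mat n n (\<lambda>(r, c). deriv (\<lambda>t. P (v(i := t)) $$ (r, c)) (v i))"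

text \<open>Psi applied to a polynomial in X_0..X_(k-1) (variables of index >= k do not occur,
so their partial derivatives vanish and the sum may run over i < k).\<close>
definition Psi :: "nat \<Rightarrow> real mat \<Rightarrow> real mat \<Rightarrow> nat \<Rightarrow> ((nat \<Rightarrow> real) \<Rightarrow> real mat) \<Rightarrow> (nat \<Rightarrow> real) \<Rightarrow> real mat" where
  "Psi n A B k P v = mat n n (\<lambda>(r, c).
      (P v * (A + v 0 \<cdot>\<^sub>m B)) $$ (r, c)
      + (\<Sum>i<k. (pderiv_at n P i v) $$ (r, c) * v (Suc i)))"

fun Pk :: "nat \<Rightarrow> real mat \<Rightarrow> real mat \<Rightarrow> nat \<Rightarrow> (nat \<Rightarrow> real) \<Rightarrow> real mat" where
  "Pk n A B 0 = (\<lambda>v. 1\<^sub>m n)"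
| "Pk n A B (Suc k) = Psi n A B k (Pk n A B k)"

definition phi_jacobian :: "nat \<Rightarrow> real mat \<Rightarrow> real mat \<Rightarrow> real mat \<Rightarrow> real vec \<Rightarrow> nat \<Rightarrow> nat \<Rightarrow> nat \<Rightarrow> (nat \<Rightarrow> real) \<Rightarrow> real mat" where
  "phi_jacobian n A B C \<omega>0 m k0 N v = mat N (k0 + N) (\<lambda>(j, i).
      deriv (\<lambda>t. (C * B ^\<^sub>m m * Pk n A B (k0 + j) (v(i := t)) *\<^sub>v \<omega>0) $ 0) (v i))"

end

theory Submission
  imports Defs "HOL-Computational_Algebra.Polynomial" "Jordan_Normal_Form.DL_Rank_Submatrix"
begin


inductive_set polyfun :: "((nat \<Rightarrow> real) \<Rightarrow> real) set" where
  pf_const: "(\<lambda>w. c) \<in> polyfun"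
| pf_var: "(\<lambda>w. w i) \<in> polyfun"
| pf_add: "f \<in> polyfun \<Longrightarrow> g \<in> polyfun \<Longrightarrow> (\<lambda>w. f w + g w) \<in> polyfun"
| pf_mult: "f \<in> polyfun \<Longrightarrow> g \<in> polyfun \<Longrightarrow> (\<lambda>w. f w * g w) \<in> polyfun"

definition pd :: "nat \<Rightarrow> ((nat \<Rightarrow> real) \<Rightarrow> real) \<Rightarrow> (nat \<Rightarrow> real) \<Rightarrow> real" where
  "pd i f = (\<lambda>w. deriv (\<lambda>t. f (w(i := t))) (w i))"

lemma pf_has_deriv:
  assumes "f \<in> polyfun"
  shows "\<exists>f'\<in>polyfun. \<forall>w t. ((\<lambda>t. f (w(i := t))) has_real_derivative f' (w(i := t))) (at t)"
  using assms
proof induction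
  case (pf_const c)
  show ?case by (intro bexI[of _ "\<lambda>w. 0"]) (auto intro: polyfun.intros)
next
  case (pf_var j)
  show ?case
  proof (cases "i = j")
    case True
    then show ?thesis by (intro bexI[of _ "\<lambda>w. 1"]) (auto intro!: polyfun.intros derivative_eq_intros)
  next
    case False
    then show ?thesis by (intro bexI[of _ "\<lambda>w. 0"]) (auto intro!: polyfun.intros derivative_eq_intros)
  qed
next
  case (pf_add f g)
  then obtain f' g' where f': "f' \<in> polyfun" "\<And>w t. ((\<lambda>t. f (w(i := t))) has_real_derivative f' (w(i := t))) (at t)"
    and g': "g' \<in> polyfun" "\<And>w t. ((\<lambda>t. g (w(i := t))) has_real_derivative g' (w(i := t))) (at t)" by blast
  show ?case
  proof (rule bexI[of _ "\<lambda>w. f' w + g' w"])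
    show "\<forall>w t. ((\<lambda>t. f (w(i := t)) + g (w(i := t))) has_real_derivative f' (w(i := t)) + g' (w(i := t))) (at t)"
      using DERIV_add[OF f'(2) g'(2)] by blast
  qed (auto intro!: polyfun.intros f' g')
next
  case (pf_mult f g)
  then obtain f' g' where f': "f' \<in> polyfun" "\<And>w t. ((\<lambda>t. f (w(i := t))) has_real_derivative f' (w(i := t))) (at t)"
    and g': "g' \<in> polyfun" "\<And>w t. ((\<lambda>t. g (w(i := t))) has_real_derivative g' (w(i := t))) (at t)" by blast
  show ?case
  proof (rule bexI[of _ "\<lambda>w. f' w * g w + f w * g' w"])
    show "\<forall>w t. ((\<lambda>t. f (w(i := t)) * g (w(i := t))) has_real_derivative f' (w(i := t)) * g (w(i := t)) + f (w(i := t)) * g' (w(i := t))) (at t)"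
      using DERIV_mult'[OF f'(2) g'(2)] by (simp add: algebra_simps)
  qed (auto intro!: polyfun.intros f' g' pf_mult)
qed

lemma pd_has_deriv:
  assumes "f \<in> polyfun"
  shows "((\<lambda>t. f (w(i := t))) has_real_derivative pd i f (w(i := t))) (at t)"
    and "pd i f \<in> polyfun"
proof -
  obtain f' where f': "f' \<in> polyfun" "\<And>w t. ((\<lambda>t. f (w(i := t))) has_real_derivative f' (w(i := t))) (at t)"
    using pf_has_deriv[OF assms, of i] by blast
  have eq: "pd i f = f'"
  proof
    fix w
    have "deriv (\<lambda>t. f (w(i := t))) (w i) = f' (w(i := w i))"
      by (rule DERIV_imp_deriv[OF f'(2)])
    then show "pd i f w = f' w" by (simp add: pd_def)
  qed
  show "((\<lambda>t. f (w(i := t))) has_real_derivative pd i f (w(i := t))) (at t)"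
    using f'(2) eq by simp
  show "pd i f \<in> polyfun" using eq f' by simp
qed

lemma pd_unique:
  assumes "\<And>w t. ((\<lambda>t. f (w(i := t))) has_real_derivative f' (w(i := t))) (at t)"
  shows "pd i f = f'"
proof
  fix w
  have "deriv (\<lambda>t. f (w(i := t))) (w i) = f' (w(i := w i))"
    by (rule DERIV_imp_deriv[OF assms])
  then show "pd i f w = f' w" by (simp add: pd_def)
qed

lemma pd_const[simp]: "pd i (\<lambda>w. c) = (\<lambda>w. 0)"
  by (rule pd_unique) auto

lemma pd_var: "pd i (\<lambda>w. w j) = (\<lambda>w. if i = j then 1 else 0)"
  by (rule pd_unique) (auto intro!: derivative_eq_intros)

lemma pd_add:
  assumes "f \<in> polyfun" "g \<in> polyfun"
  shows "pd i (\<lambda>w. f w + g w) = (\<lambda>w. pd i f w + pd i g w)"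
  by (rule pd_unique) (auto intro!: DERIV_add pd_has_deriv assms)

lemma pd_mult:
  assumes "f \<in> polyfun" "g \<in> polyfun"
  shows "pd i (\<lambda>w. f w * g w) = (\<lambda>w. pd i f w * g w + f w * pd i g w)"
proof (rule pd_unique)
  fix w t
  show "((\<lambda>t. f (w(i := t)) * g (w(i := t))) has_real_derivative pd i f (w(i := t)) * g (w(i := t)) + f (w(i := t)) * pd i g (w(i := t))) (at t)"
    using DERIV_mult'[OF pd_has_deriv(1)[OF assms(1)] pd_has_deriv(1)[OF assms(2)]] by (simp add: algebra_simps)
qed

lemma pf_sum: "finite S \<Longrightarrow> (\<And>x. x \<in> S \<Longrightarrow> f x \<in> polyfun) \<Longrightarrow> (\<lambda>w. \<Sum>x\<in>S. f x w) \<in> polyfun"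
  by (induction S rule: finite_induct) (auto intro: polyfun.intros)

lemma pd_sum: "finite S \<Longrightarrow> (\<And>x. x \<in> S \<Longrightarrow> f x \<in> polyfun) \<Longrightarrow>
   pd i (\<lambda>w. \<Sum>x\<in>S. f x w) = (\<lambda>w. \<Sum>x\<in>S. pd i (f x) w)"
proof (induction S rule: finite_induct)
  case empty
  then show ?case by simp
next
  case (insert x F)
  have "pd i (\<lambda>w. \<Sum>x\<in>insert x F. f x w) = pd i (\<lambda>w. f x w + (\<Sum>x\<in>F. f x w))"
    using insert by simp
  also have "\<dots> = (\<lambda>w. pd i (f x) w + pd i (\<lambda>w. \<Sum>x\<in>F. f x w) w)"
    by (rule pd_add) (use insert pf_sum in auto)
  finally show ?case using insert by simp
qed

lemma pd_cmult: "f \<in> polyfun \<Longrightarrow> pd i (\<lambda>w. c * f w) = (\<lambda>w. c * pd i f w)"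
  using pd_mult[of "\<lambda>w. c" f i] by (simp add: polyfun.intros)

lemma pd_multc: "f \<in> polyfun \<Longrightarrow> pd i (\<lambda>w. f w * c) = (\<lambda>w. pd i f w * c)"
  using pd_mult[of f "\<lambda>w. c" i] by (simp add: polyfun.intros)

lemma pf_pd: "f \<in> polyfun \<Longrightarrow> pd i f \<in> polyfun"
  using pd_has_deriv(2) .

lemma pd_comm: "f \<in> polyfun \<Longrightarrow> pd i (pd j f) = pd j (pd i f)"
proof (induction rule: polyfun.induct)
  case (pf_const c)
  then show ?case by simp
next
  case (pf_var k)
  then show ?case by (simp add: pd_var if_distrib)
next
  case (pf_add f g)
  then show ?case by (simp add: pd_add pf_pd)
next
  case (pf_mult f g)
  then show ?case by (simp add: pd_mult pd_add pf_pd polyfun.intros algebra_simps)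
qed

definition dep :: "nat \<Rightarrow> ((nat \<Rightarrow> real) \<Rightarrow> 'a) \<Rightarrow> bool" where
  "dep K f \<longleftrightarrow> (\<forall>w w'. (\<forall>i<K. w i = w' i) \<longrightarrow> f w = f w')"

lemma pd_dep_zero: "dep K f \<Longrightarrow> K \<le> i \<Longrightarrow> pd i f = (\<lambda>w. 0)"
proof
  fix w assume d: "dep K f" "K \<le> i"
  have "(\<lambda>t. f (w(i := t))) = (\<lambda>t. f w)"
    using d unfolding dep_def by (intro ext) (metis fun_upd_other not_le)
  then show "pd i f w = 0" by (simp add: pd_def)
qed

lemma dep_pd: "dep K f \<Longrightarrow> dep K (pd i f)"
proof (cases "K \<le> i")
  case True
  assume "dep K f" then show ?thesis using pd_dep_zero[OF _ True] by (simp add: dep_def)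
next
  case False
  assume d: "dep K f"
  show ?thesis unfolding dep_def pd_def
  proof (intro allI impI)
    fix w w' :: "nat \<Rightarrow> real" assume a: "\<forall>i<K. w i = w' i"
    have "(\<lambda>t. f (w(i := t))) = (\<lambda>t. f (w'(i := t)))"
      using d a unfolding dep_def by (intro ext) auto
    moreover have "w i = w' i" using a False by simp
    ultimately show "deriv (\<lambda>t. f (w(i := t))) (w i) = deriv (\<lambda>t. f (w'(i := t))) (w' i)" by simp
  qed
qed

lemma dep_mono: "dep K f \<Longrightarrow> K \<le> K' \<Longrightarrow> dep K' f"
  unfolding dep_def by auto



fun bp :: "nat \<Rightarrow> real poly" where
  "bp 0 = 1"
| "bp (Suc a) = Polynomial.smult (1 / real (Suc a)) ([:real (Suc a), 1:] * bp a)"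

lemma poly_bp: "poly (bp a) (real x) = real ((x + a) choose a)"
proof (induction a)
  case 0
  then show ?case by simp
next
  case (Suc a)
  have e: "(x + a + 1) * ((x + a) choose a) = ((x + Suc a) choose Suc a) * Suc a"
    using Suc_times_binomial_eq[of "x + a" a] by simp
  have e2: "real (x + a + 1) * real ((x + a) choose a) = real ((x + Suc a) choose Suc a) * real (Suc a)"
    by (metis e of_nat_mult)
  have e3: "real ((x + Suc a) choose Suc a) = real (x + a + 1) * real ((x + a) choose a) / real (Suc a)"
    using e2 by (simp only: eq_divide_eq) simp
  have "poly (bp (Suc a)) (real x) = 1 / real (Suc a) * ((real (Suc a) + real x) * poly (bp a) (real x))"
    by (simp only: bp.simps poly_smult poly_mult) simp
  also have "\<dots> = real (x + a + 1) * real ((x + a) choose a) / real (Suc a)"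
    using Suc by simp
  finally show ?case using e3 by simp
qed

lemma bp_degree: "Polynomial.degree (bp a) = a \<and> Polynomial.coeff (bp a) a = 1 / fact a"
proof (induction a)
  case 0
  then show ?case by simp
next
  case (Suc a)
  have nz: "bp a \<noteq> 0" using Suc by auto
  have d: "Polynomial.degree ([:real (Suc a), 1:] * bp a) = Suc a"
    using Suc nz by (subst degree_mult_eq) auto
  have "Polynomial.coeff ([:real (Suc a), 1:] * bp a) (Polynomial.degree [:real (Suc a), 1:] + Polynomial.degree (bp a)) =
        Polynomial.coeff [:real (Suc a), 1:] (Polynomial.degree [:real (Suc a), 1:]) * Polynomial.coeff (bp a) (Polynomial.degree (bp a))"
    by (rule coeff_mult_degree_sum)
  then have c: "Polynomial.coeff ([:real (Suc a), 1:] * bp a) (Suc a) = 1 / fact a" using Suc by simp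
  have "Polynomial.coeff (bp (Suc a)) (Suc a) = 1 / real (Suc a) * Polynomial.coeff ([:real (Suc a), 1:] * bp a) (Suc a)"
    by (simp only: bp.simps coeff_smult)
  also have "\<dots> = 1 / fact (Suc a)" using c by (simp add: fact_Suc del: of_nat_Suc)
  finally have "Polynomial.coeff (bp (Suc a)) (Suc a) = 1 / fact (Suc a)" .
  moreover have "Polynomial.degree (bp (Suc a)) = Suc a"
    by (simp only: bp.simps degree_smult_eq d) simp
  ultimately show ?case by simp
qed

definition qd :: "(nat \<Rightarrow> nat \<Rightarrow> real) \<Rightarrow> nat \<Rightarrow> real poly" where
  "qd cc d = (\<Sum>a\<le>d. Polynomial.smult (cc a (d - a)) (bp a))"

lemma poly_qd: "poly (qd cc d) (real x) = (\<Sum>a\<le>d. real ((x + a) choose a) * cc a (d - a))"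
  by (simp add: qd_def poly_sum poly_bp mult.commute)

lemma coeff_qd: "Polynomial.coeff (qd cc d) d = cc d 0 / fact d"
proof -
  have "Polynomial.coeff (qd cc d) d = (\<Sum>a\<le>d. cc a (d - a) * Polynomial.coeff (bp a) d)"
    by (simp add: qd_def coeff_sum)
  also have "\<dots> = (\<Sum>a\<in>{d}. cc a (d - a) * Polynomial.coeff (bp a) d)"
  proof (rule sum.mono_neutral_right)
    show "\<forall>i\<in>{..d} - {d}. cc i (d - i) * Polynomial.coeff (bp i) d = 0"
      using bp_degree by (auto intro!: coeff_eq_0)
  qed auto
  finally show ?thesis using bp_degree[of d] by simp
qed

lemma pick_interval: "j < N \<Longrightarrow> pick {x0..<x0+N} j = x0 + j"
proof (induction j)
  case 0
  then show ?case by simp (rule Least_equality, auto)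
next
  case (Suc j)
  then show ?case by (auto intro!: Least_equality)
qed

lemma (in vec_space) rank_le_n: assumes "A \<in> carrier_mat n nc" shows "rank A \<le> n"
proof -
  have "set (cols A) \<subseteq> carrier_vec n" using cols_dim assms by (metis carrier_matD(1))
  then have "subspace class_ring (span (set (cols A))) V"
    by (intro span_is_subspace)
  then have "vectorspace.dim class_ring (span_vs (set (cols A))) \<le> dim"
    using subspace_dim fin_dim fin_dim_span_cols[OF assms] by blast
  then show ?thesis unfolding rank_def dim_is_n .
qed

lemma rank_from_cc:
  fixes cc :: "nat \<Rightarrow> nat \<Rightarrow> real" and Jf :: "nat \<Rightarrow> nat \<Rightarrow> real"
  assumes J: "\<And>k l. l < k \<Longrightarrow> Jf k l = poly (qd cc (k - 1 - l)) (real l)"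
    and J0: "\<And>k l. k \<le> l \<Longrightarrow> Jf k l = 0"
    and nz: "cc d0 0 \<noteq> 0"
  shows "\<exists>k0. \<forall>N\<ge>1. vec_space.rank N (mat N (k0+N) (\<lambda>(j,i). Jf (k0+j) i)) = N"
proof -
  have ex: "\<exists>d. qd cc d \<noteq> 0"
    using coeff_qd[of cc d0] nz by (intro exI[of _ d0]) auto
  define ds where "ds = (LEAST d. qd cc d \<noteq> 0)"
  have qs: "qd cc ds \<noteq> 0" unfolding ds_def by (rule LeastI_ex[OF ex])
  have below: "\<And>d. d < ds \<Longrightarrow> qd cc d = 0" unfolding ds_def using not_less_Least by blast
  have fin: "finite {x::nat. poly (qd cc ds) (real x) = 0}"
  proof -
    have "finite {x::real. poly (qd cc ds) x = 0}" using poly_roots_finite[OF qs] .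
    then have "finite (real -` {x::real. poly (qd cc ds) x = 0})"
      by (rule finite_vimageI) (auto simp: inj_on_def)
    then show ?thesis by (simp add: vimage_def)
  qed
  obtain X0 where X0: "\<And>x. X0 \<le> x \<Longrightarrow> poly (qd cc ds) (real x) \<noteq> 0"
  proof -
    obtain b where "\<forall>x\<in>{x::nat. poly (qd cc ds) (real x) = 0}. x < b"
      using fin finite_nat_bounded by blast
    then show ?thesis using that[of b] by force
  qed
  define k0 where "k0 = X0 + ds + 1"
  show ?thesis
  proof (intro exI[of _ k0] allI impI)
    fix N :: nat assume N: "N \<ge> 1"
    define M where "M = mat N (k0+N) (\<lambda>(j,i). Jf (k0+j) i)"
    have Mc: "M \<in> carrier_mat N (k0+N)" unfolding M_def by simp
    define S where "S = submatrix M UNIV {X0..<X0+N}"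
    have c1: "card {i. i < N \<and> i \<in> (UNIV::nat set)} = N" by simp
    have c2: "{j. j < k0 + N \<and> j \<in> {X0..<X0+N}} = {X0..<X0+N}" unfolding k0_def by auto
    have Sc: "S \<in> carrier_mat N N" unfolding S_def submatrix_def using Mc c1 c2 by auto
    have Sij: "S $$ (i, j) = Jf (k0 + i) (X0 + j)" if "i < N" "j < N" for i j
    proof -
      have "S $$ (i,j) = M $$ (pick UNIV i, pick {X0..<X0+N} j)"
        unfolding S_def using that Mc c1 c2 by (intro submatrix_index) auto
      also have "\<dots> = M $$ (i, X0 + j)" by (simp add: pick_UNIV pick_interval that)
      also have "\<dots> = Jf (k0 + i) (X0 + j)" unfolding M_def using that k0_def by simp
      finally show ?thesis .
    qed
    have upper0: "S $$ (i, j) = 0" if "i < j" "j < N" for i j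
    proof (cases "X0 + j < k0 + i")
      case True
      have "k0 + i - 1 - (X0 + j) < ds" using that True unfolding k0_def by auto
      then have "qd cc (k0 + i - 1 - (X0 + j)) = 0" by (rule below)
      then show ?thesis using Sij[of i j] that J[OF True] by simp
    next
      case False
      then show ?thesis using Sij[of i j] that J0 by simp
    qed
    have diag: "S $$ (i, i) \<noteq> 0" if "i < N" for i
    proof -
      have lt: "X0 + i < k0 + i" unfolding k0_def by simp
      have "k0 + i - 1 - (X0 + i) = ds" unfolding k0_def by simp
      then show ?thesis using Sij[of i i] that J[OF lt] X0[of "X0 + i"] by simp
    qed
    have "det S = prod_list (diag_mat S)"
      by (rule det_lower_triangular[OF _ Sc]) (use upper0 in auto)
    also have "\<dots> = (\<Prod>i = 0..<N. S $$ (i,i))" using Sc by (simp add: prod_list_diag_prod)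
    also have "\<dots> \<noteq> 0" using diag by (auto simp: prod_zero_iff)
    finally have "det S \<noteq> 0" .
    then have "card {j. j < k0 + N \<and> j \<in> {X0..<X0+N}} \<le> vec_space.rank N M"
      unfolding S_def by (intro vec_space.rank_gt_minor[OF Mc])
    then have "N \<le> vec_space.rank N M" using c2 by simp
    moreover have "vec_space.rank N M \<le> N" by (rule vec_space.rank_le_n[OF Mc])
    ultimately show "vec_space.rank N (mat N (k0+N) (\<lambda>(j,i). Jf (k0+j) i)) = N"
      unfolding M_def by simp
  qed
qed



lemma comb1:
  fixes g :: "nat \<Rightarrow> nat \<Rightarrow> real"
  shows "(\<Sum>a\<le>e. real (a + Suc l' choose Suc l') * g (Suc a) (e - a)) + (\<Sum>a\<le>Suc e. real (a + l' choose l') * g a (Suc e - a))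
       = (\<Sum>a\<le>Suc e. real (a + Suc l' choose Suc l') * g a (Suc e - a))"
  by (simp add: sum.atMost_Suc_shift sum.distrib algebra_simps del: sum.atMost_Suc)

lemma comb0:
  fixes g :: "nat \<Rightarrow> nat \<Rightarrow> real"
  shows "(\<Sum>a\<le>Suc e. g a (Suc e - a)) = g 0 (Suc e) + (\<Sum>a\<le>e. g (Suc a) (e - a))"
  by (simp add: sum.atMost_Suc_shift del: sum.atMost_Suc)

lemma pf_M: "(\<lambda>w. a + w 0 * b) \<in> polyfun"
  by (intro polyfun.intros)

lemma pd_M: "pd l (\<lambda>w. a + w 0 * b) = (\<lambda>w. if l = 0 then b else 0)"
proof -
  have "pd l (\<lambda>w. a + w 0 * b) = (\<lambda>w. pd l (\<lambda>w. a) w + pd l (\<lambda>w. w 0 * b) w)"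
    by (rule pd_add) (auto intro: polyfun.intros)
  also have "pd l (\<lambda>w. w 0 * b) = (\<lambda>w. pd l (\<lambda>w. w 0) w * b)"
    by (rule pd_multc) (rule polyfun.intros)
  finally show ?thesis by (auto simp: pd_var)
qed

type_synonym ef = "nat \<Rightarrow> nat \<Rightarrow> (nat \<Rightarrow> real) \<Rightarrow> real"

locale psys =
  fixes n :: nat and A B :: "real mat"
  assumes A: "A \<in> carrier_mat n n" and B: "B \<in> carrier_mat n n"
begin

definition psi :: "nat \<Rightarrow> ef \<Rightarrow> ef" where
  "psi K F = (\<lambda>r c w. (\<Sum>t<n. F r t w * (A $$ (t,c) + w 0 * B $$ (t,c))) + (\<Sum>i<K. pd i (F r c) w * w (Suc i)))"

fun pk :: "nat \<Rightarrow> ef" where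
  "pk 0 = (\<lambda>r c w. if r = c then 1 else 0)"
| "pk (Suc k) = psi k (pk k)"

definition pfm :: "ef \<Rightarrow> bool" where
  "pfm F \<longleftrightarrow> (\<forall>r<n. \<forall>c<n. F r c \<in> polyfun)"

definition depm :: "nat \<Rightarrow> ef \<Rightarrow> bool" where
  "depm K F \<longleftrightarrow> (\<forall>r<n. \<forall>c<n. dep K (F r c))"

definition rmulB :: "ef \<Rightarrow> ef" where
  "rmulB F = (\<lambda>r c w. \<Sum>t<n. F r t w * B $$ (t,c))"

definition lmul :: "real mat \<Rightarrow> ef \<Rightarrow> ef" where
  "lmul Y F = (\<lambda>r c w. \<Sum>t<n. Y $$ (r,t) * F t c w)"

lemma pfm_psi: "pfm F \<Longrightarrow> pfm (psi K F)"
  unfolding pfm_def psi_def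
  by (auto intro!: pf_add pf_sum pf_mult pf_pd pf_M polyfun.intros)

lemma depm_psi: assumes "depm K F" shows "depm (Suc K) (psi K F)"
  unfolding depm_def dep_def
proof (intro allI impI)
  fix r c w w' assume rc: "r < n" "c < n" and ww: "\<forall>i<Suc K. w i = (w' i :: real)"
  have F: "F r t w = F r t w'" if "t < n" for t
    using assms rc that ww unfolding depm_def dep_def by auto
  have P: "pd i (F r c) w = pd i (F r c) w'" for i
    using dep_pd[of K "F r c" i] assms rc ww unfolding depm_def dep_def by auto
  show "psi K F r c w = psi K F r c w'"
    unfolding psi_def using F P ww by (auto intro!: sum.cong arg_cong2[where f="(+)"])
qed

lemma psi_cong: "(\<And>r c. r < n \<Longrightarrow> c < n \<Longrightarrow> F r c = F' r c) \<Longrightarrow> r < n \<Longrightarrow> c < n \<Longrightarrow> psi K F r c = psi K F' r c"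
  unfolding psi_def by (intro ext) (auto intro!: sum.cong arg_cong2[where f="(+)"])

lemma psi_mono:
  assumes "depm K F" "K \<le> K'" "r < n" "c < n"
  shows "psi K' F r c = psi K F r c"
proof (intro ext)
  fix w
  have z: "pd i (F r c) = (\<lambda>w. 0)" if "K \<le> i" for i
    using assms that pd_dep_zero unfolding depm_def by blast
  have "(\<Sum>i<K. pd i (F r c) w * w (Suc i)) = (\<Sum>i<K'. pd i (F r c) w * w (Suc i))"
    by (rule sum.mono_neutral_left) (use assms z in auto)
  then show "psi K' F r c w = psi K F r c w" unfolding psi_def by simp
qed

lemma pd_psi:
  assumes pf: "pfm F" and dp: "depm K F" and rc: "r < n" "c < n"
  shows "pd l (psi K F r c) = (\<lambda>w. psi K (\<lambda>r c. pd l (F r c)) r c w + (if l = 0 then rmulB F r c w else pd (l - 1) (F r c) w))"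
proof -
  have pfF: "F r' c' \<in> polyfun" if "r' < n" "c' < n" for r' c' using pf that unfolding pfm_def by auto
  define S1 where "S1 = (\<lambda>w. \<Sum>t<n. F r t w * (A $$ (t,c) + w 0 * B $$ (t,c)))"
  define S2 where "S2 = (\<lambda>w. \<Sum>i<K. pd i (F r c) w * w (Suc i))"
  have pS1: "S1 \<in> polyfun" unfolding S1_def using rc by (auto intro!: pf_sum pf_mult pfF pf_M)
  have pS2: "S2 \<in> polyfun" unfolding S2_def using rc by (auto intro!: pf_sum pf_mult pfF pf_pd polyfun.intros)
  have e: "psi K F r c = (\<lambda>w. S1 w + S2 w)" unfolding psi_def S1_def S2_def by simp
  have "pd l (psi K F r c) = (\<lambda>w. pd l S1 w + pd l S2 w)" unfolding e by (rule pd_add[OF pS1 pS2])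
  also have "pd l S1 = (\<lambda>w. \<Sum>t<n. pd l (\<lambda>w. F r t w * (A $$ (t,c) + w 0 * B $$ (t,c))) w)"
    unfolding S1_def using rc by (intro pd_sum) (auto intro!: pf_mult pfF pf_M)
  also have "\<dots> = (\<lambda>w. \<Sum>t<n. pd l (F r t) w * (A $$ (t,c) + w 0 * B $$ (t,c)) + F r t w * (if l = 0 then B $$ (t,c) else 0))"
    using rc by (intro ext sum.cong refl) (simp add: pd_mult pfF pf_M pd_M)
  also have "pd l S2 = (\<lambda>w. \<Sum>i<K. pd l (\<lambda>w. pd i (F r c) w * w (Suc i)) w)"
    unfolding S2_def using rc by (intro pd_sum) (auto intro!: pf_mult pfF pf_pd polyfun.intros)
  also have "\<dots> = (\<lambda>w. \<Sum>i<K. pd i (pd l (F r c)) w * w (Suc i) + pd i (F r c) w * (if l = Suc i then 1 else 0))"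
    using rc by (intro ext sum.cong refl) (simp add: pd_mult pfF pf_pd polyfun.intros pd_var pd_comm)
  finally have 1: "pd l (psi K F r c) = (\<lambda>w. (\<Sum>t<n. pd l (F r t) w * (A $$ (t,c) + w 0 * B $$ (t,c)))
      + (\<Sum>t<n. F r t w * (if l = 0 then B $$ (t,c) else 0))
      + ((\<Sum>i<K. pd i (pd l (F r c)) w * w (Suc i)) + (\<Sum>i<K. pd i (F r c) w * (if l = Suc i then 1 else 0))))"
    by (simp add: sum.distrib)
  have 2: "(\<Sum>t<n. F r t w * (if l = 0 then B $$ (t,c) else 0)) = (if l = 0 then rmulB F r c w else 0)" for w
    unfolding rmulB_def by auto
  have 3: "(\<Sum>i<K. pd i (F r c) w * (if l = Suc i then 1 else 0)) = (if l = 0 then 0 else pd (l - 1) (F r c) w)" for w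
  proof (cases l)
    case 0
    then show ?thesis by simp
  next
    case (Suc j)
    show ?thesis
    proof (cases "j < K")
      case True
      have "(\<Sum>i<K. pd i (F r c) w * (if l = Suc i then 1 else 0)) = (\<Sum>i\<in>{j}. pd i (F r c) w * (if l = Suc i then 1 else 0))"
        by (rule sum.mono_neutral_right) (use True Suc in auto)
      then show ?thesis using Suc by simp
    next
      case False
      then have "K \<le> j" by simp
      moreover have "dep K (F r c)" using dp rc unfolding depm_def by auto
      ultimately have "pd j (F r c) = (\<lambda>w. 0)" using pd_dep_zero by blast
      then show ?thesis using Suc by (auto intro!: sum.neutral)
    qed
  qed
  show ?thesis unfolding 1 2 3 unfolding psi_def by (intro ext) simp
qed

lemma lmul_psi:
  assumes Y: "Y \<in> carrier_mat n n" and pf: "pfm F" and rc: "r < n" "c < n"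
  shows "psi K (lmul Y F) r c = lmul Y (psi K F) r c"
proof (intro ext)
  fix w :: "nat \<Rightarrow> real"
  have pfF: "F r' c' \<in> polyfun" if "r' < n" "c' < n" for r' c' using pf that unfolding pfm_def by auto
  have pdl: "pd i (lmul Y F r c) = (\<lambda>w. \<Sum>u<n. Y $$ (r,u) * pd i (F u c) w)" for i
  proof -
    have "pd i (lmul Y F r c) = (\<lambda>w. \<Sum>u<n. pd i (\<lambda>w. Y $$ (r,u) * F u c w) w)"
      unfolding lmul_def using rc by (intro pd_sum) (auto intro!: pf_mult pfF polyfun.intros)
    also have "\<dots> = (\<lambda>w. \<Sum>u<n. Y $$ (r,u) * pd i (F u c) w)"
      using rc by (intro ext sum.cong refl) (simp add: pd_cmult pfF)
    finally show ?thesis .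
  qed
  define M where "M = (\<lambda>t. A $$ (t,c) + w 0 * B $$ (t,c))"
  have a: "(\<Sum>t<n. (\<Sum>u<n. Y $$ (r,u) * F u t w) * M t) = (\<Sum>u<n. Y $$ (r,u) * (\<Sum>t<n. F u t w * M t))"
  proof -
    have "(\<Sum>t<n. (\<Sum>u<n. Y $$ (r,u) * F u t w) * M t) = (\<Sum>t<n. \<Sum>u<n. Y $$ (r,u) * (F u t w * M t))"
      by (simp add: sum_distrib_right mult.assoc)
    also have "\<dots> = (\<Sum>u<n. \<Sum>t<n. Y $$ (r,u) * (F u t w * M t))" by (rule sum.swap)
    also have "\<dots> = (\<Sum>u<n. Y $$ (r,u) * (\<Sum>t<n. F u t w * M t))" by (simp add: sum_distrib_left)
    finally show ?thesis .
  qed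
  have b: "(\<Sum>i<K. (\<Sum>u<n. Y $$ (r,u) * pd i (F u c) w) * w (Suc i)) = (\<Sum>u<n. Y $$ (r,u) * (\<Sum>i<K. pd i (F u c) w * w (Suc i)))"
  proof -
    have "(\<Sum>i<K. (\<Sum>u<n. Y $$ (r,u) * pd i (F u c) w) * w (Suc i)) = (\<Sum>i<K. \<Sum>u<n. Y $$ (r,u) * (pd i (F u c) w * w (Suc i)))"
      by (simp add: sum_distrib_right mult.assoc)
    also have "\<dots> = (\<Sum>u<n. \<Sum>i<K. Y $$ (r,u) * (pd i (F u c) w * w (Suc i)))" by (rule sum.swap)
    also have "\<dots> = (\<Sum>u<n. Y $$ (r,u) * (\<Sum>i<K. pd i (F u c) w * w (Suc i)))" by (simp add: sum_distrib_left)
    finally show ?thesis .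
  qed
  have "psi K (lmul Y F) r c w = (\<Sum>t<n. (\<Sum>u<n. Y $$ (r,u) * F u t w) * M t) + (\<Sum>i<K. (\<Sum>u<n. Y $$ (r,u) * pd i (F u c) w) * w (Suc i))"
    unfolding psi_def pdl M_def by (simp add: lmul_def)
  also have "\<dots> = (\<Sum>u<n. Y $$ (r,u) * ((\<Sum>t<n. F u t w * M t) + (\<Sum>i<K. pd i (F u c) w * w (Suc i))))"
    unfolding a b by (simp add: distrib_left sum.distrib)
  also have "\<dots> = lmul Y (psi K F) r c w" unfolding lmul_def psi_def M_def by simp
  finally show "psi K (lmul Y F) r c w = lmul Y (psi K F) r c w" .
qed

lemma lin_psi:
  assumes S: "finite S" and pf: "\<And>j. j \<in> S \<Longrightarrow> pfm (F j)" and rc: "r < n" "c < n"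
  shows "psi K (\<lambda>r c w. \<Sum>j\<in>S. a j * F j r c w) r c w = (\<Sum>j\<in>S. a j * psi K (F j) r c w)"
proof -
  have pfF: "F j r' c' \<in> polyfun" if "j \<in> S" "r' < n" "c' < n" for j r' c' using pf that unfolding pfm_def by auto
  have pdl: "pd i (\<lambda>w. \<Sum>j\<in>S. a j * F j r c w) = (\<lambda>w. \<Sum>j\<in>S. a j * pd i (F j r c) w)" for i
  proof -
    have "pd i (\<lambda>w. \<Sum>j\<in>S. a j * F j r c w) = (\<lambda>w. \<Sum>j\<in>S. pd i (\<lambda>w. a j * F j r c w) w)"
      using rc S by (intro pd_sum) (auto intro!: pf_mult pfF polyfun.intros)
    also have "\<dots> = (\<lambda>w. \<Sum>j\<in>S. a j * pd i (F j r c) w)"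
      using rc by (intro ext sum.cong refl) (simp add: pd_cmult pfF)
    finally show ?thesis .
  qed
  define M where "M = (\<lambda>t. A $$ (t,c) + w 0 * B $$ (t,c))"
  have a: "(\<Sum>t<n. (\<Sum>j\<in>S. a j * F j r t w) * M t) = (\<Sum>j\<in>S. a j * (\<Sum>t<n. F j r t w * M t))"
  proof -
    have "(\<Sum>t<n. (\<Sum>j\<in>S. a j * F j r t w) * M t) = (\<Sum>t<n. \<Sum>j\<in>S. a j * (F j r t w * M t))"
      by (simp add: sum_distrib_right mult.assoc)
    also have "\<dots> = (\<Sum>j\<in>S. \<Sum>t<n. a j * (F j r t w * M t))" by (rule sum.swap)
    also have "\<dots> = (\<Sum>j\<in>S. a j * (\<Sum>t<n. F j r t w * M t))" by (simp add: sum_distrib_left)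
    finally show ?thesis .
  qed
  have b: "(\<Sum>i<K. (\<Sum>j\<in>S. a j * pd i (F j r c) w) * w (Suc i)) = (\<Sum>j\<in>S. a j * (\<Sum>i<K. pd i (F j r c) w * w (Suc i)))"
  proof -
    have "(\<Sum>i<K. (\<Sum>j\<in>S. a j * pd i (F j r c) w) * w (Suc i)) = (\<Sum>i<K. \<Sum>j\<in>S. a j * (pd i (F j r c) w * w (Suc i)))"
      by (simp add: sum_distrib_right mult.assoc)
    also have "\<dots> = (\<Sum>j\<in>S. \<Sum>i<K. a j * (pd i (F j r c) w * w (Suc i)))" by (rule sum.swap)
    also have "\<dots> = (\<Sum>j\<in>S. a j * (\<Sum>i<K. pd i (F j r c) w * w (Suc i)))" by (simp add: sum_distrib_left)
    finally show ?thesis .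
  qed
  have "psi K (\<lambda>r c w. \<Sum>j\<in>S. a j * F j r c w) r c w = (\<Sum>t<n. (\<Sum>j\<in>S. a j * F j r t w) * M t) + (\<Sum>i<K. (\<Sum>j\<in>S. a j * pd i (F j r c) w) * w (Suc i))"
    unfolding psi_def pdl M_def by simp
  also have "\<dots> = (\<Sum>j\<in>S. a j * ((\<Sum>t<n. F j r t w * M t) + (\<Sum>i<K. pd i (F j r c) w * w (Suc i))))"
    unfolding a b by (simp add: distrib_left sum.distrib)
  also have "\<dots> = (\<Sum>j\<in>S. a j * psi K (F j) r c w)" unfolding psi_def M_def by simp
  finally show ?thesis .
qed

lemma pk_props: "pfm (pk k) \<and> depm k (pk k)"
proof (induction k)
  case 0
  then show ?case unfolding pfm_def depm_def dep_def by (auto intro: polyfun.intros)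
next
  case (Suc k)
  then show ?case by (auto intro: pfm_psi depm_psi)
qed

lemma rmulB_props: "pfm F \<Longrightarrow> depm K F \<Longrightarrow> pfm (rmulB F) \<and> depm K (rmulB F)"
  unfolding pfm_def depm_def dep_def rmulB_def
  by (auto intro!: pf_sum pf_mult polyfun.intros sum.cong)

fun G :: "nat \<Rightarrow> nat \<Rightarrow> ef" where
  "G 0 b = rmulB (pk b)"
| "G (Suc a) b = psi (a + b) (G a b)"

lemma G_props: "pfm (G a b) \<and> depm (a + b) (G a b)"
proof (induction a)
  case 0
  then show ?case using rmulB_props[OF conjunct1[OF pk_props[of b]] conjunct2[OF pk_props[of b]]] by simp
next
  case (Suc a)
  then show ?case by (auto intro: pfm_psi depm_psi)
qed

definition R :: "nat \<Rightarrow> nat \<Rightarrow> ef" where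
  "R k l = (\<lambda>r c w. if l < k then (\<Sum>a\<le>k-1-l. real ((a + l) choose l) * G a (k-1-l-a) r c w) else 0)"

lemma pd_pk: "r < n \<Longrightarrow> c < n \<Longrightarrow> pd l (pk k r c) = R k l r c"
proof (induction k arbitrary: l r c)
  case 0
  then show ?case unfolding R_def by (auto intro!: ext)
next
  case (Suc k)
  note rc = Suc.prems
  show ?case
  proof (cases "Suc k \<le> l")
    case True
    then have "pd l (pk (Suc k) r c) = (\<lambda>w. 0)"
      using pk_props[of "Suc k"] rc pd_dep_zero unfolding depm_def by blast
    then show ?thesis using True unfolding R_def by auto
  next
    case False
    then have lk: "l \<le> k" by simp
    have IHf: "(\<lambda>r c. pd l (pk k r c)) r' c' = R k l r' c'" if "r' < n" "c' < n" for r' c'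
      using Suc.IH that by simp
    have "pd l (pk (Suc k) r c) = (\<lambda>w. psi k (\<lambda>r c. pd l (pk k r c)) r c w + (if l = 0 then rmulB (pk k) r c w else pd (l - 1) (pk k r c) w))"
      using pd_psi[of "pk k" k r c l] pk_props rc by simp
    also have "psi k (\<lambda>r c. pd l (pk k r c)) r c = psi k (R k l) r c"
      by (rule psi_cong[OF IHf rc])
    finally have e1: "pd l (pk (Suc k) r c) = (\<lambda>w. psi k (R k l) r c w + (if l = 0 then rmulB (pk k) r c w else pd (l - 1) (pk k r c) w))" .
    have e2: "psi k (R k l) r c w = (if l < k then (\<Sum>a\<le>k-1-l. real ((a + l) choose l) * G (Suc a) (k-1-l-a) r c w) else 0)" for w
    proof (cases "l < k")
      case True
      have "psi k (R k l) r c = psi k (\<lambda>r c w. \<Sum>a\<le>k-1-l. real ((a + l) choose l) * G a (k-1-l-a) r c w) r c"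
        by (rule psi_cong[OF _ rc]) (simp add: R_def True)
      then have "psi k (R k l) r c w = (\<Sum>a\<le>k-1-l. real ((a + l) choose l) * psi k (G a (k-1-l-a)) r c w)"
        using lin_psi[of "{..k-1-l}" "\<lambda>a. G a (k-1-l-a)" r c k "\<lambda>a. real ((a + l) choose l)" w] G_props rc by simp
      also have "\<dots> = (\<Sum>a\<le>k-1-l. real ((a + l) choose l) * G (Suc a) (k-1-l-a) r c w)"
      proof (intro sum.cong refl)
        fix a assume a: "a \<in> {..k-1-l}"
        have "psi k (G a (k-1-l-a)) r c = psi (a + (k-1-l-a)) (G a (k-1-l-a)) r c"
          by (rule psi_mono) (use G_props a rc in auto)
        then show "real ((a + l) choose l) * psi k (G a (k-1-l-a)) r c w = real ((a + l) choose l) * G (Suc a) (k-1-l-a) r c w"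
          by simp
      qed
      finally show ?thesis using True by simp
    next
      case False
      have "psi k (R k l) r c = psi k (\<lambda>r c w. 0) r c"
        by (rule psi_cong[OF _ rc]) (simp add: R_def False)
      then show ?thesis using False by (simp add: psi_def)
    qed
    show ?thesis
    proof (cases l)
      case 0
      show ?thesis
      proof (intro ext)
        fix w
        have "pd l (pk (Suc k) r c) w = (if 0 < k then (\<Sum>a\<le>k-1. G (Suc a) (k-1-a) r c w) else 0) + G 0 k r c w"
          using e1 e2 0 by simp
        also have "\<dots> = (\<Sum>a\<le>k. G a (k - a) r c w)"
        proof (cases k)
          case 0
          then show ?thesis by simp
        next
          case (Suc e)
          then show ?thesis using comb0[of "\<lambda>a b. G a b r c w" e] by simp
        qed
        also have "\<dots> = R (Suc k) l r c w" unfolding R_def using 0 by simp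
        finally show "pd l (pk (Suc k) r c) w = R (Suc k) l r c w" .
      qed
    next
      case (Suc l')
      have IH2: "pd l' (pk k r c) w = (\<Sum>a\<le>k-1-l'. real ((a + l') choose l') * G a (k-1-l'-a) r c w)" for w
        using Suc.IH[OF rc, of l'] Suc lk unfolding R_def by simp
      show ?thesis
      proof (intro ext)
        fix w
        have "pd l (pk (Suc k) r c) w = (if l < k then (\<Sum>a\<le>k-1-l. real ((a + l) choose l) * G (Suc a) (k-1-l-a) r c w) else 0)
             + (\<Sum>a\<le>k-1-l'. real ((a + l') choose l') * G a (k-1-l'-a) r c w)"
          using e1 e2 IH2 Suc by simp
        also have "\<dots> = (\<Sum>a\<le>Suc k-1-l. real ((a + l) choose l) * G a (Suc k-1-l-a) r c w)"
        proof (cases "l < k")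
          case True
          then obtain e where e: "k - l = Suc e" by (metis Suc_diff_Suc)
          have a1: "k - 1 - Suc l' = e" "k - 1 - l' = Suc e" "Suc k - 1 - Suc l' = Suc e" using e Suc by auto
          have T': "Suc l' < k" using True Suc by simp
          show ?thesis unfolding Suc unfolding a1 if_P[OF T'] by (rule comb1[where e=e and l'=l' and g="\<lambda>a b. G a b r c w"])
        next
          case False
          then have "l = k" using lk by simp
          then show ?thesis using Suc by simp
        qed
        also have "\<dots> = R (Suc k) l r c w" unfolding R_def using lk by simp
        finally show "pd l (pk (Suc k) r c) w = R (Suc k) l r c w" .
      qed
    qed
  qed
qed

lemma G_lead: "r < n \<Longrightarrow> c < n \<Longrightarrow> G a 0 r c = lmul B (pk a) r c"
proof (induction a arbitrary: r c)
  case 0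
  show ?case
  proof (intro ext)
    fix w
    have "(\<Sum>t<n. (if r = t then 1 else 0) * B $$ (t,c)) = (\<Sum>t<n. if r = t then B $$ (t,c) else 0)"
      by (intro sum.cong) auto
    moreover have "(\<Sum>t<n. B $$ (r,t) * (if t = c then 1 else 0)) = (\<Sum>t<n. if t = c then B $$ (r,t) else 0)"
      by (intro sum.cong) auto
    ultimately show "G 0 0 r c w = lmul B (pk 0) r c w"
      using 0 by (simp add: rmulB_def lmul_def)
  qed
next
  case (Suc a)
  have "G (Suc a) 0 r c = psi a (G a 0) r c" by simp
  also have "\<dots> = psi a (lmul B (pk a)) r c" by (rule psi_cong[OF _ Suc.prems]) (use Suc.IH in auto)
  also have "\<dots> = lmul B (psi a (pk a)) r c" by (rule lmul_psi[OF B _ Suc.prems]) (use pk_props in auto)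
  finally show ?case by simp
qed

end


lemma mult_entry:
  assumes "X \<in> carrier_mat a n" "Y \<in> carrier_mat n b" "r < a" "c < b"
  shows "(X * Y) $$ (r,c) = (\<Sum>t<n. X $$ (r,t) * Y $$ (t,c))"
  using assms by (simp add: scalar_prod_def lessThan_atLeast0)

lemma vec_entry:
  assumes L: "L \<in> carrier_mat 1 n" and X: "X \<in> carrier_mat n n" and w: "\<omega> \<in> carrier_vec n"
  shows "(L * X *\<^sub>v \<omega>) $ 0 = (\<Sum>r<n. \<Sum>c<n. L $$ (0,r) * X $$ (r,c) * \<omega> $ c)"
proof -
  have "(L * X *\<^sub>v \<omega>) $ 0 = (\<Sum>r<n. L $$ (0,r) * (\<Sum>c<n. X $$ (r,c) * \<omega> $ c))"
    using L X w by (simp add: scalar_prod_def lessThan_atLeast0)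
  then show ?thesis by (simp add: sum_distrib_left mult.assoc)
qed

lemma triple_swap:
  fixes x y f :: "nat \<Rightarrow> real" and g :: "nat \<Rightarrow> nat \<Rightarrow> nat \<Rightarrow> real"
  shows "(\<Sum>r\<in>R. \<Sum>c\<in>Cs. x r * (\<Sum>a\<in>S. f a * g a r c) * y c) = (\<Sum>a\<in>S. f a * (\<Sum>r\<in>R. \<Sum>c\<in>Cs. x r * g a r c * y c))"
proof -
  have "(\<Sum>r\<in>R. \<Sum>c\<in>Cs. x r * (\<Sum>a\<in>S. f a * g a r c) * y c) = (\<Sum>r\<in>R. \<Sum>c\<in>Cs. \<Sum>a\<in>S. f a * (x r * g a r c * y c))"
    by (intro sum.cong refl) (simp add: sum_distrib_left sum_distrib_right algebra_simps)
  also have "\<dots> = (\<Sum>r\<in>R. \<Sum>a\<in>S. \<Sum>c\<in>Cs. f a * (x r * g a r c * y c))"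
    by (rule sum.cong[OF refl]) (rule sum.swap)
  also have "\<dots> = (\<Sum>a\<in>S. \<Sum>r\<in>R. \<Sum>c\<in>Cs. f a * (x r * g a r c * y c))"
    by (rule sum.swap)
  also have "\<dots> = (\<Sum>a\<in>S. f a * (\<Sum>r\<in>R. \<Sum>c\<in>Cs. x r * g a r c * y c))"
    by (simp add: sum_distrib_left)
  finally show ?thesis .
qed

context psys
begin

lemma Pk_ent: "Pk n A B k w \<in> carrier_mat n n \<and> (\<forall>r<n. \<forall>c<n. Pk n A B k w $$ (r,c) = pk k r c w)"
proof (induction k arbitrary: w)
  case 0
  then show ?case by auto
next
  case (Suc k)
  have fe: "(\<lambda>w. Pk n A B k w $$ (r,c)) = pk k r c" if "r < n" "c < n" for r c
    using Suc.IH that by auto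
  have M: "A + w 0 \<cdot>\<^sub>m B \<in> carrier_mat n n" using A B by simp
  have "Pk n A B (Suc k) w $$ (r,c) = pk (Suc k) r c w" if rc: "r < n" "c < n" for r c
  proof -
    have "Pk n A B (Suc k) w $$ (r,c) = (Pk n A B k w * (A + w 0 \<cdot>\<^sub>m B)) $$ (r, c)
      + (\<Sum>i<k. (pderiv_at n (Pk n A B k) i w) $$ (r, c) * w (Suc i))"
      using rc by (simp add: Psi_def)
    also have "(Pk n A B k w * (A + w 0 \<cdot>\<^sub>m B)) $$ (r, c) = (\<Sum>t<n. pk k r t w * (A $$ (t,c) + w 0 * B $$ (t,c)))"
    proof -
      have P: "Pk n A B k w \<in> carrier_mat n n" using Suc.IH by blast
      show ?thesis unfolding mult_entry[OF P M rc]
        using rc Suc.IH[of w] A B by (intro sum.cong refl) auto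
    qed
    also have "(\<Sum>i<k. (pderiv_at n (Pk n A B k) i w) $$ (r, c) * w (Suc i)) = (\<Sum>i<k. pd i (pk k r c) w * w (Suc i))"
      using rc by (intro sum.cong refl) (simp add: pderiv_at_def fe[OF rc, symmetric] pd_def)
    finally show ?thesis by (simp add: psi_def)
  qed
  then show ?case by (simp add: Psi_def)
qed

lemma main:
  fixes C :: "real mat" and \<omega>0 :: "real vec" and m :: nat and v :: "nat \<Rightarrow> real"
  assumes C: "C \<in> carrier_mat 1 n" and w0: "\<omega>0 \<in> carrier_vec n"
    and hyp: "\<exists>i\<ge>1. (C * B ^\<^sub>m (m + 1) * Pk n A B (i - 1) v *\<^sub>v \<omega>0) $ 0 \<noteq> 0"
  shows "\<exists>k0. \<forall>N\<ge>1. vec_space.rank N (phi_jacobian n A B C \<omega>0 m k0 N v) = N"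
proof -
  define L where "L = C * B ^\<^sub>m m"
  have Lc: "L \<in> carrier_mat 1 n" unfolding L_def using C B by simp
  define cc where "cc a b = (\<Sum>r<n. \<Sum>c<n. L $$ (0,r) * G a b r c v * \<omega>0 $ c)" for a b
  define Jf where "Jf k l = (if l < k then (\<Sum>a\<le>k-1-l. real ((a + l) choose l) * cc a (k-1-l-a)) else 0)" for k l
  have fun_eq: "(\<lambda>w. (C * B ^\<^sub>m m * Pk n A B k w *\<^sub>v \<omega>0) $ 0) = (\<lambda>w. \<Sum>r<n. \<Sum>c<n. L $$ (0,r) * pk k r c w * \<omega>0 $ c)" for k
  proof
    fix w
    show "(C * B ^\<^sub>m m * Pk n A B k w *\<^sub>v \<omega>0) $ 0 = (\<Sum>r<n. \<Sum>c<n. L $$ (0,r) * pk k r c w * \<omega>0 $ c)"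
      unfolding L_def[symmetric] using vec_entry[OF Lc _ w0, of "Pk n A B k w"] Pk_ent[of k w] by simp
  qed
  have pfk: "pk k r c \<in> polyfun" if "r < n" "c < n" for k r c
    using pk_props[of k] that unfolding pfm_def by auto
  have entry: "deriv (\<lambda>t. (C * B ^\<^sub>m m * Pk n A B k (v(i := t)) *\<^sub>v \<omega>0) $ 0) (v i) = Jf k i" for k i
  proof -
    have "deriv (\<lambda>t. (C * B ^\<^sub>m m * Pk n A B k (v(i := t)) *\<^sub>v \<omega>0) $ 0) (v i)
        = pd i (\<lambda>w. (C * B ^\<^sub>m m * Pk n A B k w *\<^sub>v \<omega>0) $ 0) v" by (simp add: pd_def)
    also have "\<dots> = pd i (\<lambda>w. \<Sum>r<n. \<Sum>c<n. L $$ (0,r) * pk k r c w * \<omega>0 $ c) v" unfolding fun_eq ..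
    also have "\<dots> = (\<Sum>r<n. pd i (\<lambda>w. \<Sum>c<n. L $$ (0,r) * pk k r c w * \<omega>0 $ c) v)"
      by (subst pd_sum) (auto intro!: pf_sum pf_mult pfk polyfun.intros)
    also have "\<dots> = (\<Sum>r<n. \<Sum>c<n. pd i (\<lambda>w. L $$ (0,r) * pk k r c w * \<omega>0 $ c) v)"
      by (intro sum.cong refl, subst pd_sum) (auto intro!: pf_sum pf_mult pfk polyfun.intros)
    also have "\<dots> = (\<Sum>r<n. \<Sum>c<n. L $$ (0,r) * pd i (pk k r c) v * \<omega>0 $ c)"
      by (intro sum.cong refl) (simp add: pd_multc pd_cmult pfk pf_mult polyfun.intros)
    also have "\<dots> = (\<Sum>r<n. \<Sum>c<n. L $$ (0,r) * R k i r c v * \<omega>0 $ c)"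
      by (intro sum.cong refl) (simp add: pd_pk)
    also have "\<dots> = Jf k i"
    proof (cases "i < k")
      case True
      then show ?thesis by (simp only: R_def Jf_def cc_def if_P[OF True] if_True triple_swap)
    next
      case False
      then show ?thesis unfolding R_def Jf_def by simp
    qed
    finally show ?thesis .
  qed
  have JfJ: "Jf k l = poly (qd cc (k - 1 - l)) (real l)" if "l < k" for k l
  proof -
    have "real ((a + l) choose l) = real ((l + a) choose a)" for a
      using binomial_symmetric[of l "a + l"] by (simp add: add.commute)
    then show ?thesis unfolding Jf_def poly_qd using that by simp
  qed
  have Jf0: "Jf k l = 0" if "k \<le> l" for k l unfolding Jf_def using that by simp
  obtain i where i: "i \<ge> 1" "(C * B ^\<^sub>m (m + 1) * Pk n A B (i - 1) v *\<^sub>v \<omega>0) $ 0 \<noteq> 0" using hyp by blast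
  define d where "d = i - 1"
  have "(C * B ^\<^sub>m (m + 1) * Pk n A B d v *\<^sub>v \<omega>0) $ 0 = (L * (B * Pk n A B d v) *\<^sub>v \<omega>0) $ 0"
  proof -
    have "C * B ^\<^sub>m (m + 1) = C * (B ^\<^sub>m m * B)" by simp
    also have "\<dots> = L * B" unfolding L_def using C B by (intro assoc_mult_mat[symmetric]) auto
    finally have "C * B ^\<^sub>m (m + 1) = L * B" .
    moreover have "L * B * Pk n A B d v = L * (B * Pk n A B d v)"
      using Lc B Pk_ent[of d v] by (intro assoc_mult_mat) auto
    ultimately show ?thesis by simp
  qed
  also have "\<dots> = (\<Sum>r<n. \<Sum>c<n. L $$ (0,r) * (B * Pk n A B d v) $$ (r,c) * \<omega>0 $ c)"
    using vec_entry[OF Lc _ w0] B Pk_ent[of d v] by simp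
  also have "\<dots> = cc d 0" unfolding cc_def
  proof (intro sum.cong refl)
    fix r c assume rc: "r \<in> {..<n}" "c \<in> {..<n}"
    have P: "Pk n A B d v \<in> carrier_mat n n" using Pk_ent by blast
    have rc': "r < n" "c < n" using rc by auto
    have "(B * Pk n A B d v) $$ (r,c) = (\<Sum>t<n. B $$ (r,t) * pk d t c v)"
      unfolding mult_entry[OF B P rc'] using rc' Pk_ent[of d v] by (intro sum.cong refl) auto
    also have "\<dots> = G d 0 r c v" using G_lead[of r c d] rc by (simp add: lmul_def)
    finally show "L $$ (0,r) * (B * Pk n A B d v) $$ (r,c) * \<omega>0 $ c = L $$ (0,r) * G d 0 r c v * \<omega>0 $ c" by simp
  qed
  finally have ccnz: "cc d 0 \<noteq> 0" using i d_def by simp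
  obtain k0 where k0: "\<forall>N\<ge>1. vec_space.rank N (mat N (k0+N) (\<lambda>(j,i). Jf (k0+j) i)) = N"
    using rank_from_cc[of Jf cc d, OF JfJ Jf0 ccnz] by blast
  have pj: "phi_jacobian n A B C \<omega>0 m k0 N v = mat N (k0+N) (\<lambda>(j,i). Jf (k0+j) i)" for N
    unfolding phi_jacobian_def by (intro eq_matI) (auto simp: entry)
  show ?thesis by (intro exI[of _ k0]) (simp only: pj, rule k0)
qed

end

theorem corollary4:
  fixes n m :: nat and A B C :: "real mat" and \<omega>0 :: "real vec" and v :: "nat \<Rightarrow> real"
  assumes "n \<ge> 1"
    and "A \<in> carrier_mat n n" and "B \<in> carrier_mat n n" and "C \<in> carrier_mat 1 n"
    and "\<omega>0 \<in> carrier_vec n"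
    and "\<exists>i\<ge>1. (C * B ^\<^sub>m (m + 1) * Pk n A B (i - 1) v *\<^sub>v \<omega>0) $ 0 \<noteq> 0"
  shows "\<exists>k0::nat. \<forall>N\<ge>1. vec_space.rank N (phi_jacobian n A B C \<omega>0 m k0 N v) = N"
proof -
  interpret psys n A B using assms(2,3) by unfold_locales
  show ?thesis by (rule main[OF assms(4,5,6)])
qed

end
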